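(* Let $G$ be a countable group and $\mu$ a symmetric probability measure on $G$ supported on a subgroup $H$ equipped with a quasi-norm $\|\cdot\|$. Assume there are a constant $d>0$ and a positive increasing function $\phi$ on $(0,\infty)$, regularly varying of positive index at infinity, such that $\#\{h\in H:\|h\|\le r\}\simeq r^d$ and $\mu(h)\asymp[\phi(1+\|h\|)(1+\|h\|)^d]^{-1}$ for $h\in H$. Then there is a constant $C$ such that for all $f\in L^2(G)$, all $R\ge1$ and all $h\in H$ with $\|h\|\le R$, $$\sum_{x\in G}|f(xh)-f(x)|^2\le C\phi(R)\,\mathcal E_{G,\mu}(f,f).$$
   Context: A quasi-norm on a group $H$ is a map $N:H\to[0,\infty)$ with a constant $A$ such that $N(gh)\le A(N(g)+N(h))$ for all $g,h$ (here also assumed symmetric, $N(g^{-1})=N(g)$, with $N(e)=0$). For positive functions, $f_1\asymp f_2$ means $c_1f_1\le f_2\le c_2f_1$ for constants $0<c_1\le c_2$; $f_1\simeq f_2$ on $[1,\infty)$ means $c_1f_1(c_2t)\le f_2(t)\le c_3f_1(c_4t)$ for constants $c_i>0$. A positive function $f$ is regularly varying of index $\gamma$ at infinity if $f(\lambda t)/f(t)\to\lambda^\gamma$ for every $\lambda>0$. $\mathcal E_{G,\mu}(f,f)=\frac12\sum_{x,y\in G}|f(xy)-f(x)|^2\mu(y)$ for $f\in L^2(G)$ (counting measure). *)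

theory Defs
  imports "HOL-Analysis.Analysis" "HOL-Library.Countable"
begin

text \<open>Groups are written additively (type class group_add, not necessarily commutative);
  the product x h of the paper is x + h.\<close>

definition is_subgroup :: "'a::group_add set \<Rightarrow> bool" where
  "is_subgroup H \<longleftrightarrow> 0 \<in> H \<and> (\<forall>g\<in>H. \<forall>h\<in>H. g + h \<in> H) \<and> (\<forall>h\<in>H. - h \<in> H)"

definition quasi_norm_on :: "'a::group_add set \<Rightarrow> ('a \<Rightarrow> real) \<Rightarrow> bool" where
  "quasi_norm_on H N \<longleftrightarrow>
     (\<forall>h\<in>H. N h \<ge> 0) \<and> N 0 = 0 \<and> (\<forall>h\<in>H. N (- h) = N h) \<and>
     (\<exists>A. \<forall>g\<in>H. \<forall>h\<in>H. N (g + h) \<le> A * (N g + N h))"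

definition regularly_varying :: "(real \<Rightarrow> real) \<Rightarrow> real \<Rightarrow> bool" where
  "regularly_varying f \<gamma> \<longleftrightarrow>
     (\<forall>t>0. f t > 0) \<and>
     (\<forall>s>0. ((\<lambda>t. f (s * t) / f t) \<longlongrightarrow> s powr \<gamma>) at_top)"

definition sym_prob_measure :: "('a::group_add \<Rightarrow> real) \<Rightarrow> bool" where
  "sym_prob_measure \<mu> \<longleftrightarrow> (\<forall>x. \<mu> x \<ge> 0) \<and> (\<mu> has_sum 1) UNIV \<and> (\<forall>x. \<mu> (- x) = \<mu> x)"

definition in_L2 :: "('a \<Rightarrow> real) \<Rightarrow> bool" where
  "in_L2 f \<longleftrightarrow> (\<lambda>x. (f x)\<^sup>2) summable_on UNIV"

definition dirichlet_form :: "('a::group_add \<Rightarrow> real) \<Rightarrow> ('a \<Rightarrow> real) \<Rightarrow> real" where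
  "dirichlet_form \<mu> f = (1/2) * (\<Sum>\<^sub>\<infinity>(x, y)\<in>UNIV. (f (x + y) - f x)\<^sup>2 * \<mu> y)"

end

theory Submission
  imports Defs
begin

lemma bij_addr: "bij_betw (\<lambda>x::'a::group_add. x + k) UNIV UNIV"
  by (rule bij_betwI[where g="\<lambda>x. x - k"]) (auto simp: algebra_simps)

lemma sq_shift_summable:
  fixes f :: "'a::group_add \<Rightarrow> real"
  assumes "in_L2 f"
  shows "(\<lambda>x. (f (x + k))\<^sup>2) summable_on UNIV"
  using summable_on_reindex_bij_betw[OF bij_addr[of k], of "\<lambda>x. (f x)\<^sup>2"] assms
  by (simp add: in_L2_def)

lemma sq_shift_infsum:
  fixes f :: "'a::group_add \<Rightarrow> real"
  shows "(\<Sum>\<^sub>\<infinity>x\<in>UNIV. (f (x + k))\<^sup>2) = (\<Sum>\<^sub>\<infinity>x\<in>UNIV. (f x)\<^sup>2)"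
  using infsum_reindex_bij_betw[OF bij_addr[of k], of "\<lambda>x. (f x)\<^sup>2"] by simp

lemma sq_le: "((a::real) - b)\<^sup>2 \<le> 2 * a\<^sup>2 + 2 * b\<^sup>2"
proof -
  have "0 \<le> (a + b)\<^sup>2" by simp
  then show ?thesis by (simp add: power2_eq_square algebra_simps)
qed

lemma sq_le2: "((a::real) + b)\<^sup>2 \<le> 2 * a\<^sup>2 + 2 * b\<^sup>2"
  using sq_le[of a "-b"] by simp

lemma diff_summable:
  fixes f :: "'a::group_add \<Rightarrow> real"
  assumes "in_L2 f"
  shows "(\<lambda>x. (f (x + k) - f x)\<^sup>2) summable_on UNIV"
proof (rule summable_on_comparison_test)
  show "(\<lambda>x. 2 * (f (x + k))\<^sup>2 + 2 * (f x)\<^sup>2) summable_on UNIV"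
    using assms sq_shift_summable[OF assms, of k]
    by (intro summable_on_add summable_on_cmult_right) (auto simp: in_L2_def)
qed (auto intro: sq_le)

lemma diff_shift_infsum:
  fixes f :: "'a::group_add \<Rightarrow> real"
  shows "(\<Sum>\<^sub>\<infinity>x\<in>UNIV. (f (x + k + j) - f (x + k))\<^sup>2) = (\<Sum>\<^sub>\<infinity>x\<in>UNIV. (f (x + j) - f x)\<^sup>2)"
  using infsum_reindex_bij_betw[OF bij_addr[of k], of "\<lambda>x. (f (x + j) - f x)\<^sup>2"] by simp

lemma diff_triangle:
  fixes f :: "'a::group_add \<Rightarrow> real"
  assumes "in_L2 f"
  shows "(\<Sum>\<^sub>\<infinity>x\<in>UNIV. (f (x + h) - f x)\<^sup>2) \<le>
     2 * (\<Sum>\<^sub>\<infinity>x\<in>UNIV. (f (x + k) - f x)\<^sup>2) + 2 * (\<Sum>\<^sub>\<infinity>x\<in>UNIV. (f (x + (-k + h)) - f x)\<^sup>2)"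
proof -
  have s2: "(\<lambda>x. (f (x + k + (-k + h)) - f (x + k))\<^sup>2) summable_on UNIV"
    using summable_on_reindex_bij_betw[OF bij_addr[of k], of "\<lambda>x. (f (x + (-k + h)) - f x)\<^sup>2"]
      diff_summable[OF assms, of "-k+h"] by simp
  have "(\<Sum>\<^sub>\<infinity>x\<in>UNIV. (f (x + h) - f x)\<^sup>2) \<le>
     (\<Sum>\<^sub>\<infinity>x\<in>UNIV. 2 * (f (x + k) - f x)\<^sup>2 + 2 * (f (x + k + (-k + h)) - f (x + k))\<^sup>2)"
  proof (rule infsum_mono)
    show "(\<lambda>x. 2 * (f (x + k) - f x)\<^sup>2 + 2 * (f (x + k + (-k + h)) - f (x + k))\<^sup>2) summable_on UNIV"
      using s2 diff_summable[OF assms, of k]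
      by (intro summable_on_add summable_on_cmult_right) auto
    fix x
    have e: "x + k + (-k + h) = x + h" by (simp add: add.assoc)
    have "f (x + h) - f x = (f (x + k) - f x) + (f (x + k + (-k + h)) - f (x + k))"
      by (simp add: e)
    then show "(f (x + h) - f x)\<^sup>2 \<le> 2 * (f (x + k) - f x)\<^sup>2 + 2 * (f (x + k + (-k + h)) - f (x + k))\<^sup>2"
      using sq_le2 by metis
  qed (rule diff_summable[OF assms])
  also have "\<dots> = 2 * (\<Sum>\<^sub>\<infinity>x\<in>UNIV. (f (x + k) - f x)\<^sup>2) + 2 * (\<Sum>\<^sub>\<infinity>x\<in>UNIV. (f (x + k + (-k + h)) - f (x + k))\<^sup>2)"
    using s2 diff_summable[OF assms, of k]
    by (subst infsum_add) (auto intro: summable_on_cmult_right simp: infsum_cmult_right)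
  also have "\<dots> = 2 * (\<Sum>\<^sub>\<infinity>x\<in>UNIV. (f (x + k) - f x)\<^sup>2) + 2 * (\<Sum>\<^sub>\<infinity>x\<in>UNIV. (f (x + (-k + h)) - f x)\<^sup>2)"
    by (simp only: diff_shift_infsum)
  finally show ?thesis .
qed

lemma aux_div: "(a::real) * (k * p * X) / (b * Y) = a * (k * p) / b * (X / Y)"
  by (simp add: divide_inverse mult_ac inverse_mult_distrib)

lemma has_sum_finsum:
  fixes g :: "'b \<Rightarrow> 'a \<Rightarrow> real"
  assumes "finite K" "\<And>k. k \<in> K \<Longrightarrow> (g k has_sum s k) A"
  shows "((\<lambda>x. \<Sum>k\<in>K. g k x) has_sum (\<Sum>k\<in>K. s k)) A"
  using assms by (induction K rule: finite_induct) (auto intro: has_sum_add)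

lemma pair_summable:
  fixes f :: "'a::group_add \<Rightarrow> real" and \<mu> :: "'a \<Rightarrow> real"
  assumes "in_L2 f" "sym_prob_measure \<mu>"
  shows "(\<lambda>(x, y). (f (x + y) - f x)\<^sup>2 * \<mu> y) summable_on UNIV"
proof (rule nonneg_bdd_above_summable_on)
  have mu0: "\<And>y. \<mu> y \<ge> 0" and mus: "(\<mu> has_sum 1) UNIV"
    using assms(2) by (auto simp: sym_prob_measure_def)
  define L where "L = (\<Sum>\<^sub>\<infinity>x\<in>UNIV. (f x)\<^sup>2)"
  have fs: "(\<lambda>x. (f x)\<^sup>2) summable_on UNIV" using assms(1) by (simp add: in_L2_def)
  show "\<And>p. p \<in> UNIV \<Longrightarrow> 0 \<le> (case p of (x, y) \<Rightarrow> (f (x + y) - f x)\<^sup>2 * \<mu> y)"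
    using mu0 by auto
  have L0: "L \<ge> 0" unfolding L_def by (rule infsum_nonneg) auto
  have inner: "(\<Sum>x\<in>X. (f (x + y) - f x)\<^sup>2) \<le> 4 * L" if "finite X" for X y
  proof -
    have "(\<Sum>x\<in>X. (f (x + y) - f x)\<^sup>2) \<le> (\<Sum>x\<in>X. 2 * (f (x + y))\<^sup>2 + 2 * (f x)\<^sup>2)"
      by (rule sum_mono) (rule sq_le)
    also have "\<dots> = 2 * (\<Sum>x\<in>X. (f (x + y))\<^sup>2) + 2 * (\<Sum>x\<in>X. (f x)\<^sup>2)"
      by (simp add: sum.distrib sum_distrib_left)
    also have "(\<Sum>x\<in>X. (f (x + y))\<^sup>2) \<le> L"
      using finite_sum_le_infsum[OF sq_shift_summable[OF assms(1), of y] that]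
      by (simp add: L_def sq_shift_infsum)
    also have "(\<Sum>x\<in>X. (f x)\<^sup>2) \<le> L"
      using finite_sum_le_infsum[OF fs that] by (simp add: L_def)
    finally show ?thesis by simp
  qed
  have musum: "sum \<mu> Y \<le> 1" if "finite Y" for Y
    using finite_sum_le_has_sum[OF mus that] mu0 by auto
  show "bdd_above (sum (\<lambda>(x, y). (f (x + y) - f x)\<^sup>2 * \<mu> y) ` {F. F \<subseteq> UNIV \<and> finite F})"
  proof (rule bdd_aboveI2)
    fix F :: "('a \<times> 'a) set" assume "F \<in> {F. F \<subseteq> UNIV \<and> finite F}"
    then have F: "finite F" by auto
    have "sum (\<lambda>(x, y). (f (x + y) - f x)\<^sup>2 * \<mu> y) F \<le> sum (\<lambda>(x, y). (f (x + y) - f x)\<^sup>2 * \<mu> y) (fst ` F \<times> snd ` F)"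
      by (rule sum_mono2) (use F mu0 in \<open>auto intro: rev_image_eqI\<close>)
    also have "\<dots> = (\<Sum>x\<in>fst ` F. \<Sum>y\<in>snd ` F. (f (x + y) - f x)\<^sup>2 * \<mu> y)"
      by (simp add: sum.cartesian_product)
    also have "\<dots> = (\<Sum>y\<in>snd ` F. \<mu> y * (\<Sum>x\<in>fst ` F. (f (x + y) - f x)\<^sup>2))"
      by (subst sum.swap) (simp add: sum_distrib_left mult.commute)
    also have "\<dots> \<le> (\<Sum>y\<in>snd ` F. \<mu> y * (4 * L))"
      by (rule sum_mono, rule mult_left_mono) (use inner F mu0 in auto)
    also have "\<dots> = sum \<mu> (snd ` F) * (4 * L)" by (simp add: sum_distrib_right)
    also have "\<dots> \<le> 1 * (4 * L)"
      by (rule mult_right_mono) (use musum F L0 in auto)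
    finally show "sum (\<lambda>(x, y). (f (x + y) - f x)\<^sup>2 * \<mu> y) F \<le> 4 * L" by simp
  qed
qed

lemma pair_lower:
  fixes f :: "'a::group_add \<Rightarrow> real" and \<mu> :: "'a \<Rightarrow> real"
  assumes "in_L2 f" "sym_prob_measure \<mu>" "finite K"
  shows "(\<Sum>k\<in>K. \<mu> k * (\<Sum>\<^sub>\<infinity>x\<in>UNIV. (f (x + k) - f x)\<^sup>2)) \<le> (\<Sum>\<^sub>\<infinity>(x, y)\<in>UNIV. (f (x + y) - f x)\<^sup>2 * \<mu> y)"
proof -
  have mu0: "\<And>y. \<mu> y \<ge> 0" using assms(2) by (auto simp: sym_prob_measure_def)
  let ?G = "\<lambda>(x, y). (f (x + y) - f x)\<^sup>2 * \<mu> y"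
  have GS: "?G summable_on UNIV" by (rule pair_summable[OF assms(1,2)])
  have GK: "?G summable_on (UNIV \<times> K)" by (rule summable_on_subset_banach[OF GS]) auto
  have hs: "((\<lambda>x. \<Sum>k\<in>K. (f (x + k) - f x)\<^sup>2 * \<mu> k) has_sum (\<Sum>k\<in>K. \<mu> k * (\<Sum>\<^sub>\<infinity>x\<in>UNIV. (f (x + k) - f x)\<^sup>2))) UNIV"
  proof (rule has_sum_finsum[OF assms(3)])
    fix k
    have "((\<lambda>x. (f (x + k) - f x)\<^sup>2) has_sum (\<Sum>\<^sub>\<infinity>x\<in>UNIV. (f (x + k) - f x)\<^sup>2)) UNIV"
      using diff_summable[OF assms(1)] by (rule has_sum_infsum)
    from has_sum_cmult_right[OF this, of "\<mu> k"]
    show "((\<lambda>x. (f (x + k) - f x)\<^sup>2 * \<mu> k) has_sum \<mu> k * (\<Sum>\<^sub>\<infinity>x\<in>UNIV. (f (x + k) - f x)\<^sup>2)) UNIV"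
      by (simp add: mult.commute)
  qed
  have "(\<Sum>k\<in>K. \<mu> k * (\<Sum>\<^sub>\<infinity>x\<in>UNIV. (f (x + k) - f x)\<^sup>2)) = (\<Sum>\<^sub>\<infinity>x\<in>UNIV. \<Sum>k\<in>K. (f (x + k) - f x)\<^sup>2 * \<mu> k)"
    using hs by (simp add: infsumI)
  also have "\<dots> = (\<Sum>\<^sub>\<infinity>x\<in>UNIV. \<Sum>\<^sub>\<infinity>y\<in>K. ?G (x, y))"
    using assms(3) by simp
  also have "\<dots> = infsum ?G (UNIV \<times> K)"
    by (rule infsum_Sigma_banach[OF GK])
  also have "\<dots> \<le> infsum ?G UNIV"
    by (rule infsum_mono_neutral[OF GK GS]) (use mu0 in auto)
  finally show ?thesis by simp
qed

theorem mainTheorem10: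
  fixes \<mu> :: "'a::{group_add, countable} \<Rightarrow> real"
    and H :: "'a set" and N :: "'a \<Rightarrow> real" and \<phi> :: "real \<Rightarrow> real"
    and d \<gamma> :: real
  assumes "sym_prob_measure \<mu>"
    and "is_subgroup H"
    and "\<forall>x. x \<notin> H \<longrightarrow> \<mu> x = 0"
    and "quasi_norm_on H N"
    and "d > 0"
    and "\<forall>t>0. \<phi> t > 0"
    and "mono_on {0<..} \<phi>"
    and "\<gamma> > 0" and "regularly_varying \<phi> \<gamma>"
    and "\<exists>c1 c2 c3 c4. c1 > 0 \<and> c2 > 0 \<and> c3 > 0 \<and> c4 > 0 \<and>
           (\<forall>r\<ge>1. c1 * (c2 * r) powr d \<le> real (card {h\<in>H. N h \<le> r}) \<and>
                    real (card {h\<in>H. N h \<le> r}) \<le> c3 * (c4 * r) powr d)"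
    and "\<exists>c1 c2. c1 > 0 \<and> c2 > 0 \<and>
           (\<forall>h\<in>H. c1 / (\<phi> (1 + N h) * (1 + N h) powr d) \<le> \<mu> h \<and>
                   \<mu> h \<le> c2 / (\<phi> (1 + N h) * (1 + N h) powr d))"
  shows "\<exists>C. \<forall>f. in_L2 f \<longrightarrow> (\<forall>R\<ge>1. \<forall>h\<in>H. N h \<le> R \<longrightarrow>
           (\<Sum>\<^sub>\<infinity>x\<in>UNIV. (f (x + h) - f x)\<^sup>2) \<le> C * \<phi> R * dirichlet_form \<mu> f)"
  proof -
  note a = assms
  obtain A where A: "\<forall>g\<in>H. \<forall>h\<in>H. N (g + h) \<le> A * (N g + N h)"
    using a(4) by (auto simp: quasi_norm_on_def)
  have N0: "\<And>h. h \<in> H \<Longrightarrow> N h \<ge> 0" and Nneg: "\<And>h. h \<in> H \<Longrightarrow> N (- h) = N h"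
    using a(4) by (auto simp: quasi_norm_on_def)
  define A1 where "A1 = max A 1"
  have A1: "\<And>g h. g \<in> H \<Longrightarrow> h \<in> H \<Longrightarrow> N (g + h) \<le> A1 * (N g + N h)"
  proof -
    fix g h assume "g \<in> H" "h \<in> H"
    then have "N (g + h) \<le> A * (N g + N h)" "N g + N h \<ge> 0" using A N0 by auto
    moreover have "A * (N g + N h) \<le> A1 * (N g + N h)"
      by (rule mult_right_mono) (use \<open>N g + N h \<ge> 0\<close> in \<open>auto simp: A1_def\<close>)
    ultimately show "N (g + h) \<le> A1 * (N g + N h)" by linarith
  qed
  have A1ge: "A1 \<ge> 1" by (simp add: A1_def)
  obtain c1 c2 c3 c4 where cpos: "c1 > 0" "c2 > 0" and
    card: "\<And>r. r \<ge> 1 \<Longrightarrow> c1 * (c2 * r) powr d \<le> real (card {h\<in>H. N h \<le> r})"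
    using a(10) by auto
  obtain m1 m2 where m1: "m1 > 0" and
    mlow: "\<And>h. h \<in> H \<Longrightarrow> m1 / (\<phi> (1 + N h) * (1 + N h) powr d) \<le> \<mu> h"
    using a(11) by auto
  have phipos: "\<And>t. t > 0 \<Longrightarrow> \<phi> t > 0" using a(6) by auto
  have phimono: "\<And>s t. 0 < s \<Longrightarrow> s \<le> t \<Longrightarrow> \<phi> s \<le> \<phi> t"
    using a(7) by (auto simp: mono_on_def)
  define s where "s = 3 * A1"
  have spos: "s > 0" using A1ge by (simp add: s_def)
  have lim: "((\<lambda>t. \<phi> (s * t) / \<phi> t) \<longlongrightarrow> s powr \<gamma>) at_top"
    using a(9) spos by (auto simp: regularly_varying_def)
  have "eventually (\<lambda>t. \<phi> (s * t) / \<phi> t < s powr \<gamma> + 1) at_top"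
    by (rule order_tendstoD(2)[OF lim]) simp
  then obtain T where T: "\<And>t. t \<ge> T \<Longrightarrow> \<phi> (s * t) / \<phi> t < s powr \<gamma> + 1"
    by (auto simp: eventually_at_top_linorder)
  define T1 where "T1 = max T 1"
  define K where "K = max (s powr \<gamma> + 1) (\<phi> (s * T1) / \<phi> 1)"
  have K0: "K \<ge> 0" unfolding K_def by (smt (verit) powr_ge_zero)
  have phiK: "\<phi> (s * R) \<le> K * \<phi> R" if R: "R \<ge> 1" for R
  proof (cases "R \<ge> T1")
    case True
    then have "\<phi> (s * R) / \<phi> R < s powr \<gamma> + 1" using T by (auto simp: T1_def)
    moreover have "\<phi> R > 0" using phipos R by auto
    ultimately show ?thesis unfolding K_def
      by (smt (verit, best) divide_le_eq)
  next
    case False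
    have "\<phi> (s * R) \<le> \<phi> (s * T1)"
      by (rule phimono) (use False R spos in auto)
    also have "\<dots> = (\<phi> (s * T1) / \<phi> 1) * \<phi> 1" using phipos[of 1] by simp
    also have "\<dots> \<le> K * \<phi> 1" by (rule mult_right_mono) (use phipos[of 1] in \<open>auto simp: K_def\<close>)
    also have "\<dots> \<le> K * \<phi> R" by (rule mult_left_mono[OF phimono K0]) (use R in auto)
    finally show ?thesis .
  qed
  define C where "C = 8 * K * (s / c2) powr d / (m1 * c1)"
  show ?thesis
  proof (intro exI[of _ C] allI impI ballI)
    fix f :: "'a \<Rightarrow> real" and R :: real and h
    assume fL: "in_L2 f" and R: "R \<ge> 1" and hH: "h \<in> H" and hR: "N h \<le> R"
    define S where "S = (\<lambda>k. \<Sum>\<^sub>\<infinity>x\<in>UNIV. (f (x + k) - f x)\<^sup>2)"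
    define E where "E = (\<Sum>\<^sub>\<infinity>(x, y)\<in>UNIV. (f (x + y) - f x)\<^sup>2 * \<mu> y)"
    have dir: "dirichlet_form \<mu> f = E / 2" by (simp add: dirichlet_form_def E_def)
    have S0: "\<And>k. S k \<ge> 0" unfolding S_def by (rule infsum_nonneg) auto
    define B where "B = {k\<in>H. N k \<le> R}"
    define D where "D = {k\<in>H. N k \<le> 2 * A1 * R}"
    have cardB: "c1 * (c2 * R) powr d \<le> real (card B)" using card[OF R] by (simp add: B_def)
    have pB: "c1 * (c2 * R) powr d > 0" using cpos R by simp
    have "card B \<noteq> 0" using cardB pB by auto
    then have Bfin: "finite B" by (meson card.infinite)
    have R2: "2 * A1 * R \<ge> 1" using A1ge R by (smt (verit) mult_ge1_I)
    have cD: "c1 * (c2 * (2 * A1 * R)) powr d \<le> real (card D)" using card[OF R2] by (simp add: D_def)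
    have "c1 * (c2 * (2 * A1 * R)) powr d > 0"
    proof -
      have "c2 * (2 * A1 * R) > 0" using cpos R2 by simp
      then have "(c2 * (2 * A1 * R)) powr d > 0" by (simp only: powr_gt_zero)
      then show ?thesis using cpos by simp
    qed
    then have "card D \<noteq> 0" using cD by auto
    then have Dfin: "finite D" by (meson card.infinite)
    have RR: "R \<le> 2 * A1 * R"
    proof -
      have "1 * R \<le> (2 * A1) * R" by (rule mult_right_mono) (use A1ge R in auto)
      then show ?thesis by simp
    qed
    have BD: "B \<subseteq> D" using RR unfolding B_def D_def by auto
    define B2 where "B2 = (\<lambda>k. - k + h) ` B"
    have B2D: "B2 \<subseteq> D"
    proof
      fix j assume "j \<in> B2"
      then obtain k where k: "k \<in> B" "j = - k + h" by (auto simp: B2_def)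
      have kH: "k \<in> H" "-k \<in> H" using k a(2) by (auto simp: B_def is_subgroup_def)
      have jH: "j \<in> H" using kH hH a(2) k by (auto simp: is_subgroup_def)
      have "N j \<le> A1 * (N (-k) + N h)" using A1[OF kH(2) hH] k by simp
      also have "\<dots> \<le> A1 * (R + R)"
        by (rule mult_left_mono) (use Nneg kH k hR A1ge in \<open>auto simp: B_def\<close>)
      finally show "j \<in> D" using jH by (simp add: D_def)
    qed
    have injB: "inj_on (\<lambda>k. - k + h) B" by (auto intro: inj_onI)
    have step1: "\<And>k. S h \<le> 2 * S k + 2 * S (- k + h)"
      unfolding S_def by (rule diff_triangle[OF fL])
    have "real (card B) * S h = (\<Sum>k\<in>B. S h)" by simp
    also have "\<dots> \<le> (\<Sum>k\<in>B. 2 * S k + 2 * S (- k + h))" by (rule sum_mono) (rule step1)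
    also have "\<dots> = 2 * sum S B + 2 * sum S B2"
      by (simp add: sum.distrib sum_distrib_left B2_def sum.reindex[OF injB])
    also have "\<dots> \<le> 2 * sum S D + 2 * sum S D"
      using sum_mono2[OF Dfin BD, of S] sum_mono2[OF Dfin B2D, of S] S0 by auto
    finally have st2: "real (card B) * S h \<le> 4 * sum S D" by simp
    define Q where "Q = \<phi> (1 + 2 * A1 * R) * (1 + 2 * A1 * R) powr d"
    have Qpos: "Q > 0" unfolding Q_def using phipos R A1ge
      by (smt (verit) mult_pos_pos powr_gt_zero mult_nonneg_nonneg)
    have mD: "m1 / Q \<le> \<mu> j" if "j \<in> D" for j
    proof -
      have jH: "j \<in> H" and jN: "N j \<le> 2 * A1 * R" using that by (auto simp: D_def)
      have Nj: "N j \<ge> 0" using N0 jH by auto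
      have q: "\<phi> (1 + N j) * (1 + N j) powr d \<le> Q" unfolding Q_def
      proof (rule mult_mono)
        show "\<phi> (1 + N j) \<le> \<phi> (1 + 2 * A1 * R)" by (rule phimono) (use Nj jN in auto)
        show "(1 + N j) powr d \<le> (1 + 2 * A1 * R) powr d"
          by (rule powr_mono2) (use Nj jN a(5) in auto)
        show "0 \<le> \<phi> (1 + 2 * A1 * R)" using phipos[of "1 + 2 * A1 * R"] R2 by simp
        show "0 \<le> (1 + N j) powr d" by simp
      qed
      have "m1 / Q \<le> m1 / (\<phi> (1 + N j) * (1 + N j) powr d)"
        by (rule divide_left_mono[OF q]) (use m1 phipos Nj Qpos in \<open>auto intro!: mult_pos_pos\<close>)
      also have "\<dots> \<le> \<mu> j" by (rule mlow[OF jH])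
      finally show ?thesis .
    qed
    have "m1 / Q * sum S D = (\<Sum>j\<in>D. m1 / Q * S j)" by (simp add: sum_distrib_left)
    also have "\<dots> \<le> (\<Sum>j\<in>D. \<mu> j * S j)"
      by (rule sum_mono, rule mult_right_mono) (use mD S0 in auto)
    also have "\<dots> \<le> E" unfolding S_def E_def by (rule pair_lower[OF fL a(1) Dfin])
    finally have st3: "m1 / Q * sum S D \<le> E" .
    have P: "c1 * (c2 * R) powr d * (m1 / Q) * S h \<le> 4 * E"
    proof -
      have "c1 * (c2 * R) powr d * (m1 / Q) * S h \<le> real (card B) * (m1 / Q) * S h"
        by (intro mult_right_mono cardB) (use S0 m1 Qpos in auto)
      also have "\<dots> = (m1 / Q) * (real (card B) * S h)" by simp
      also have "\<dots> \<le> (m1 / Q) * (4 * sum S D)"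
        by (rule mult_left_mono[OF st2]) (use m1 Qpos in auto)
      also have "\<dots> = 4 * (m1 / Q * sum S D)" by simp
      also have "\<dots> \<le> 4 * E" using st3 by simp
      finally show ?thesis .
    qed
    have mu0: "\<And>y. \<mu> y \<ge> 0" using a(1) by (auto simp: sym_prob_measure_def)
    have E0: "E \<ge> 0" unfolding E_def by (rule infsum_nonneg) (use mu0 in auto)
    define W where "W = c1 * (c2 * R) powr d * (m1 / Q)"
    have Wpos: "W > 0" unfolding W_def using pB m1 Qpos by simp
    have "W * S h \<le> 4 * E" using P by (simp add: W_def)
    then have Sh: "S h \<le> 4 * E / W" using Wpos by (simp add: pos_le_divide_eq mult.commute)
    have sR: "1 + 2 * A1 * R \<le> s * R"
    proof -
      have "1 \<le> A1 * R" using A1ge R by (metis mult_ge1_I)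
      then show ?thesis by (simp add: s_def algebra_simps)
    qed
    have R2': "0 < 1 + 2 * A1 * R" using R2 by simp
    have Qle: "Q \<le> K * \<phi> R * (s * R) powr d" unfolding Q_def
    proof (rule mult_mono)
      have "\<phi> (1 + 2 * A1 * R) \<le> \<phi> (s * R)" by (rule phimono[OF R2' sR])
      also have "\<dots> \<le> K * \<phi> R" by (rule phiK[OF R])
      finally show "\<phi> (1 + 2 * A1 * R) \<le> K * \<phi> R" .
      show "(1 + 2 * A1 * R) powr d \<le> (s * R) powr d"
        by (rule powr_mono2) (use sR R2' a(5) in auto)
      show "0 \<le> K * \<phi> R" using K0 phipos[of R] R by simp
      show "0 \<le> (1 + 2 * A1 * R) powr d" by simp
    qed
    have D0: "c1 * m1 * (c2 * R) powr d > 0"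
    proof -
      have "m1 * (c1 * (c2 * R) powr d) > 0" by (rule mult_pos_pos[OF m1 pB])
      then show ?thesis by (simp add: mult.assoc mult.left_commute)
    qed
    have "4 * E / W = (4 * E) * Q / (c1 * m1 * (c2 * R) powr d)"
      using Qpos m1 pB by (simp add: W_def field_simps)
    also have "\<dots> \<le> (4 * E) * (K * \<phi> R * (s * R) powr d) / (c1 * m1 * (c2 * R) powr d)"
      by (intro divide_right_mono mult_left_mono Qle) (use E0 D0 in auto)
    also have "(s * R) powr d / (c2 * R) powr d = (s / c2) powr d"
    proof -
      have "s * R / (c2 * R) = s / c2" using R by simp
      then show ?thesis using spos cpos R by (metis powr_divide less_imp_le mult_nonneg_nonneg zero_le_one order_trans)
    qed
    then have "(4 * E) * (K * \<phi> R * (s * R) powr d) / (c1 * m1 * (c2 * R) powr d)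
        = (4 * E) * (K * \<phi> R) / (c1 * m1) * ((s * R) powr d / (c2 * R) powr d)"
      by (simp only: aux_div)
    also have "\<dots> = C * \<phi> R * (E / 2)"
      using \<open>(s * R) powr d / (c2 * R) powr d = (s / c2) powr d\<close> m1 cpos
      by (simp add: C_def field_simps)
    finally have "S h \<le> C * \<phi> R * (E / 2)" using Sh by linarith
    then show "S h \<le> C * \<phi> R * dirichlet_form \<mu> f" by (simp add: dir)
  qed
qed

end
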